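(* Let $I\subseteq\mathbb K[x_1,\dots,x_n]$ be an $\mathfrak m$-primary monomial ideal generated in a single degree $d$ (so $\mu_i=x_i^d\in G(I)$ for all $i$), and let $J=\langle\mu_1,\dots,\mu_n\rangle$. The following are equivalent: (1) $I$ is Freiman, i.e. $|G(I^2)|=n|G(I)|-\binom n2$; (2) $I$ is very good; (3) $I^2=IJ$.
   Context: Let $\mathbb K$ be a field, $R=\mathbb K[x_1,\dots,x_n]$, $\mathfrak m=\langle x_1,\dots,x_n\rangle$, $\mathbb N=\{0,1,2,\dots\}$. A monomial $x_1^{\alpha_1}\cdots x_n^{\alpha_n}$ is identified with the point $(\alpha_1,\dots,\alpha_n)\in\mathbb N^n$. For a monomial ideal $I$, $G(I)$ denotes its (unique) minimal monomial generating set. An equigenerated monomial ideal $I$ with analytic spread $l(I)$ is called Freiman if $|G(I^2)|=l(I)|G(I)|-\binom{l(I)}{2}$; for $\mathfrak m$-primary $I$, $l(I)=n$. If $I$ is an $\mathfrak m$-primary monomial ideal, then for each $i$ there is a unique $d_i\ge1$ with $x_i^{d_i}\in G(I)$; write $\mu_i=x_i^{d_i}$. For $(a_1,\dots,a_n)\in\mathbb N^n$ the box associated to $I$ is $B_{a_1,\dots,a_n}=([a_1d_1,(a_1+1)d_1]\times\cdots\times[a_nd_n,(a_n+1)d_n])\cap\mathbb N^n$; a monomial belongs to a box if its exponent vector does. An $\mathfrak m$-primary monomial ideal $I$ is called good if for every integer $l\ge1$, every element of $G(I^l)$ belongs to some box $B_{a_1,\dots,a_n}$ with $a_1+\dots+a_n=l-1$.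 For a good ideal $I$ and $a\in\mathbb N^n$, with $l=a_1+\dots+a_n+1$, define $I_{a}=\left\langle \frac{m}{\mu_1^{a_1}\cdots\mu_n^{a_n}} : m\in B_{a}\cap G(I^l)\right\rangle$. A good ideal $I$ is called very good if $I_{a}=I$ for all $a\in\mathbb N^n$. *)

theory Defs
  imports Main
begin

text \<open>Monomials of K[x_0,...,x_{n-1}] are identified with exponent vectors
  a :: nat \<Rightarrow> nat with a i = 0 for i \<ge> n; a monomial ideal is identified with
  the set of exponent vectors of the monomials it contains (an up-closed set).
  Divisibility of monomials is the pointwise order on functions.\<close>

definition vecs :: "nat \<Rightarrow> (nat \<Rightarrow> nat) set" where
  "vecs n = {a. \<forall>i\<ge>n. a i = 0}"

definition mono_ideal :: "nat \<Rightarrow> (nat \<Rightarrow> nat) set \<Rightarrow> bool" where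
  "mono_ideal n I \<longleftrightarrow> I \<subseteq> vecs n \<and> (\<forall>a\<in>I. \<forall>b\<in>vecs n. a \<le> b \<longrightarrow> b \<in> I)"

definition gen :: "nat \<Rightarrow> (nat \<Rightarrow> nat) set \<Rightarrow> (nat \<Rightarrow> nat) set" where
  "gen n S = {c \<in> vecs n. \<exists>s\<in>S. s \<le> c}"

definition mingens :: "(nat \<Rightarrow> nat) set \<Rightarrow> (nat \<Rightarrow> nat) set" where
  "mingens I = {a \<in> I. \<forall>b\<in>I. b \<le> a \<longrightarrow> b = a}"

definition mprod :: "nat \<Rightarrow> (nat \<Rightarrow> nat) set \<Rightarrow> (nat \<Rightarrow> nat) set \<Rightarrow> (nat \<Rightarrow> nat) set" where
  "mprod n I J = gen n {(\<lambda>i. a i + b i) | a b. a \<in> I \<and> b \<in> J}"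

fun mpow :: "nat \<Rightarrow> (nat \<Rightarrow> nat) set \<Rightarrow> nat \<Rightarrow> (nat \<Rightarrow> nat) set" where
  "mpow n I 0 = vecs n"
| "mpow n I (Suc l) = mprod n (mpow n I l) I"

definition deg :: "nat \<Rightarrow> (nat \<Rightarrow> nat) \<Rightarrow> nat" where
  "deg n a = (\<Sum>i<n. a i)"

definition xpow :: "nat \<Rightarrow> nat \<Rightarrow> (nat \<Rightarrow> nat)" where
  "xpow i k = (\<lambda>j. if j = i then k else 0)"

definition m_primary :: "nat \<Rightarrow> (nat \<Rightarrow> nat) set \<Rightarrow> bool" where
  "m_primary n I \<longleftrightarrow> mono_ideal n I \<and> (\<lambda>_. 0) \<notin> I \<and> (\<forall>i<n. \<exists>k. xpow i k \<in> I)"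

definition equigenerated :: "nat \<Rightarrow> (nat \<Rightarrow> nat) set \<Rightarrow> nat \<Rightarrow> bool" where
  "equigenerated n I d \<longleftrightarrow> (\<forall>a\<in>mingens I. deg n a = d)"

definition dexp :: "(nat \<Rightarrow> nat) set \<Rightarrow> nat \<Rightarrow> nat" where
  "dexp I i = (THE k. k \<ge> 1 \<and> xpow i k \<in> mingens I)"

text \<open>mu^a = mu_1^{a_1} ... mu_n^{a_n}.\<close>
definition mupow :: "(nat \<Rightarrow> nat) set \<Rightarrow> (nat \<Rightarrow> nat) \<Rightarrow> (nat \<Rightarrow> nat)" where
  "mupow I a = (\<lambda>i. a i * dexp I i)"

definition box :: "nat \<Rightarrow> (nat \<Rightarrow> nat) set \<Rightarrow> (nat \<Rightarrow> nat) \<Rightarrow> (nat \<Rightarrow> nat) set" where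
  "box n I a = {v \<in> vecs n. \<forall>i<n. a i * dexp I i \<le> v i \<and> v i \<le> (a i + 1) * dexp I i}"

definition good :: "nat \<Rightarrow> (nat \<Rightarrow> nat) set \<Rightarrow> bool" where
  "good n I \<longleftrightarrow> m_primary n I \<and>
     (\<forall>l\<ge>1. \<forall>m\<in>mingens (mpow n I l). \<exists>a\<in>vecs n. deg n a = l - 1 \<and> m \<in> box n I a)"

definition Ia :: "nat \<Rightarrow> (nat \<Rightarrow> nat) set \<Rightarrow> (nat \<Rightarrow> nat) \<Rightarrow> (nat \<Rightarrow> nat) set" where
  "Ia n I a = gen n {(\<lambda>i. m i - mupow I a i) | m. m \<in> box n I a \<inter> mingens (mpow n I (deg n a + 1))}"

definition very_good :: "nat \<Rightarrow> (nat \<Rightarrow> nat) set \<Rightarrow> bool" where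
  "very_good n I \<longleftrightarrow> good n I \<and> (\<forall>a\<in>vecs n. Ia n I a = I)"

definition freiman_primary :: "nat \<Rightarrow> (nat \<Rightarrow> nat) set \<Rightarrow> bool" where
  "freiman_primary n I \<longleftrightarrow>
     int (card (mingens (mpow n I 2))) = int n * int (card (mingens I)) - int (n choose 2)"

end

theory Submission
  imports Defs
begin


definition vadd :: "(nat \<Rightarrow> nat) \<Rightarrow> (nat \<Rightarrow> nat) \<Rightarrow> (nat \<Rightarrow> nat)" where
  "vadd a b = (\<lambda>i. a i + b i)"
definition smul :: "nat \<Rightarrow> (nat \<Rightarrow> nat) \<Rightarrow> (nat \<Rightarrow> nat)" where
  "smul d a = (\<lambda>i. d * a i)"
definition sumset :: "(nat \<Rightarrow> nat) set \<Rightarrow> (nat \<Rightarrow> nat) set \<Rightarrow> (nat \<Rightarrow> nat) set" where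
  "sumset S T = {vadd a b | a b. a \<in> S \<and> b \<in> T}"

lemma mprod_sumset: "mprod n I J = gen n (sumset I J)"
  unfolding mprod_def sumset_def vadd_def by simp

lemma vecs_vadd: "a \<in> vecs n \<Longrightarrow> b \<in> vecs n \<Longrightarrow> vadd a b \<in> vecs n"
  by (simp add: vecs_def vadd_def)
lemma vecs_smul: "a \<in> vecs n \<Longrightarrow> smul d a \<in> vecs n"
  by (simp add: vecs_def smul_def)
lemma vecs_xpow: "i < n \<Longrightarrow> xpow i k \<in> vecs n"
  by (simp add: vecs_def xpow_def)
lemma deg_vadd: "deg n (vadd a b) = deg n a + deg n b"
  by (simp add: deg_def vadd_def sum.distrib)
lemma deg_smul: "deg n (smul d a) = d * deg n a"
  by (simp add: deg_def smul_def sum_distrib_left)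
lemma deg_xpow: "i < n \<Longrightarrow> deg n (xpow i k) = k"
  by (simp add: deg_def xpow_def)
lemma coord_le_deg: "i < n \<Longrightarrow> a i \<le> deg n a"
  unfolding deg_def by (rule member_le_sum) auto

lemma deg_less:
  assumes "a \<in> vecs n" "b \<in> vecs n" "a \<le> b" "a \<noteq> b"
  shows "deg n a < deg n b"
proof -
  obtain i where "a i \<noteq> b i" using assms(4) by auto
  then have i: "i < n"
  proof (rule contrapos_np)
    assume "\<not> i < n" then show "a i = b i" using assms(1,2) unfolding vecs_def by simp
  qed
  have "a i < b i" using \<open>a i \<noteq> b i\<close> assms(3) by (simp add: le_fun_def order_less_le)
  show ?thesis unfolding deg_def
    by (rule sum_strict_mono_ex1) (use assms(3) i \<open>a i < b i\<close> in \<open>auto simp: le_fun_def\<close>)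
qed

lemma deg_eq_le:
  assumes "a \<in> vecs n" "b \<in> vecs n" "a \<le> b" "deg n a = deg n b"
  shows "a = b"
  using deg_less[OF assms(1-3)] assms(4) by auto

lemma big_coord:
  assumes "a \<in> vecs n" "deg n a = d" "j < n" "d \<le> a j"
  shows "a = xpow j d"
proof -
  have "xpow j d \<le> a" using assms(4) by (auto simp: le_fun_def xpow_def)
  then show ?thesis using deg_eq_le[OF vecs_xpow[OF assms(3)] assms(1)] deg_xpow[OF assms(3)] assms(2)
    by simp
qed

lemma mingens_below:
  assumes "I \<subseteq> vecs n" "c \<in> I"
  shows "\<exists>a\<in>mingens I. a \<le> c"
  using assms(2)
proof (induction "deg n c" arbitrary: c rule: less_induct)
  case less
  show ?case
  proof (cases "c \<in> mingens I")
    case True then show ?thesis by auto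
  next
    case False
    then obtain b where b: "b \<in> I" "b \<le> c" "b \<noteq> c" using less.prems unfolding mingens_def by auto
    have "deg n b < deg n c" using deg_less b assms(1) less.prems by auto
    then obtain a where "a \<in> mingens I" "a \<le> b" using less.hyps b(1) by blast
    then show ?thesis using order_trans[of a b c] b(2) by blast
  qed
qed

lemma gen_mingens:
  assumes "mono_ideal n I"
  shows "gen n (mingens I) = I"
proof
  show "gen n (mingens I) \<subseteq> I" using assms unfolding gen_def mono_ideal_def mingens_def by auto
  show "I \<subseteq> gen n (mingens I)" using assms mingens_below unfolding gen_def mono_ideal_def by blast
qed

lemma gen_vecs: "gen n S \<subseteq> vecs n" by (auto simp: gen_def)
lemma gen_sub: "S \<subseteq> vecs n \<Longrightarrow> S \<subseteq> gen n S" by (auto simp: gen_def)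
lemma gen_mono: "S \<subseteq> T \<Longrightarrow> gen n S \<subseteq> gen n T" by (auto simp: gen_def)

lemma mingens_gen_equideg:
  assumes "S \<subseteq> vecs n" "\<forall>s\<in>S. deg n s = k"
  shows "mingens (gen n S) = S"
proof
  show "mingens (gen n S) \<subseteq> S"
  proof
    fix c assume c: "c \<in> mingens (gen n S)"
    then obtain s where s: "s \<in> S" "s \<le> c" unfolding mingens_def gen_def by auto
    then have "s \<in> gen n S" using gen_sub[OF assms(1)] s(1) by blast
    then have "s = c" using c s unfolding mingens_def by auto
    then show "c \<in> S" using s by simp
  qed
  show "S \<subseteq> mingens (gen n S)"
  proof
    fix s assume s: "s \<in> S"
    have "\<forall>b\<in>gen n S. b \<le> s \<longrightarrow> b = s"
    proof (intro ballI impI)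
      fix b assume b: "b \<in> gen n S" "b \<le> s"
      then obtain t where t: "t \<in> S" "t \<le> b" unfolding gen_def by auto
      have ts: "t \<le> s" using order_trans[OF t(2) b(2)] .
      have "t = s" using deg_eq_le[of t n s, OF _ _ ts] t(1) assms s by (metis subsetD)
      then show "b = s" using t b by auto
    qed
    then show "s \<in> mingens (gen n S)" using s gen_sub[OF assms(1)] unfolding mingens_def by auto
  qed
qed

lemma mprod_gen:
  assumes "S \<subseteq> vecs n" "T \<subseteq> vecs n"
  shows "mprod n (gen n S) (gen n T) = gen n (sumset S T)"
proof -
  have "gen n (sumset (gen n S) (gen n T)) \<subseteq> gen n (sumset S T)"
  proof
    fix c assume "c \<in> gen n (sumset (gen n S) (gen n T))"
    then obtain a b where ab: "a \<in> gen n S" "b \<in> gen n T" "vadd a b \<le> c" "c \<in> vecs n"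
      unfolding gen_def sumset_def by auto
    obtain s t where st: "s \<in> S" "s \<le> a" "t \<in> T" "t \<le> b" using ab unfolding gen_def by auto
    have "vadd s t \<le> c" using st ab(3) unfolding le_fun_def vadd_def by (meson add_mono order_trans)
    then show "c \<in> gen n (sumset S T)" using st ab(4) unfolding gen_def sumset_def by blast
  qed
  moreover have "sumset S T \<subseteq> sumset (gen n S) (gen n T)"
    using gen_sub[OF assms(1)] gen_sub[OF assms(2)] unfolding sumset_def by blast
  ultimately show ?thesis unfolding mprod_sumset using gen_mono by blast
qed



locale frs =
  fixes n d :: nat and I :: "(nat \<Rightarrow> nat) set"
  assumes mp: "m_primary n I" and eqg: "equigenerated n I d"
begin

abbreviation "A \<equiv> mingens I"
abbreviation "V \<equiv> {xpow i d | i. i < n}"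

lemma mono: "mono_ideal n I" using mp by (simp add: m_primary_def)
lemma I_vecs: "I \<subseteq> vecs n" using mono by (simp add: mono_ideal_def)
lemma A_I: "A \<subseteq> I" by (auto simp: mingens_def)
lemma A_vecs: "A \<subseteq> vecs n" using A_I I_vecs by blast
lemma A_deg: "a \<in> A \<Longrightarrow> deg n a = d" using eqg by (simp add: equigenerated_def)
lemma I_gen: "gen n A = I" using gen_mingens[OF mono] .
lemma zero_notin: "(\<lambda>_. 0) \<notin> I" using mp by (simp add: m_primary_def)

lemma xpow_in_A: assumes i: "i < n" shows "xpow i d \<in> A"
proof -
  obtain k where "xpow i k \<in> I" using mp i by (auto simp: m_primary_def)
  then obtain a where a: "a \<in> A" "a \<le> xpow i k" using mingens_below I_vecs by blast
  have "\<forall>j. j \<noteq> i \<longrightarrow> a j = 0"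
  proof (intro allI impI)
    fix j assume "j \<noteq> i"
    have "a j \<le> xpow i k j" using a(2) by (simp add: le_fun_def)
    then show "a j = 0" using \<open>j \<noteq> i\<close> by (simp add: xpow_def)
  qed
  then have "a = xpow i (a i)" by (auto simp: xpow_def)
  then have "deg n a = a i" using deg_xpow[OF i] by metis
  then have "a i = d" using A_deg a(1) by simp
  then show ?thesis using big_coord[OF _ A_deg[OF a(1)] i] a(1) A_vecs by auto
qed

lemma V_A: "V \<subseteq> A" using xpow_in_A by auto

lemma d_pos: assumes "i < n" shows "0 < d"
proof (rule ccontr)
  assume "\<not> 0 < d"
  then have "xpow i d = (\<lambda>_. 0)" by (auto simp: xpow_def)
  then show False using xpow_in_A[OF assms] A_I zero_notin by (metis subsetD)
qed

lemma dexp_eq: assumes i: "i < n" shows "dexp I i = d"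
  unfolding dexp_def
proof (rule the_equality)
  show "1 \<le> d \<and> xpow i d \<in> A" using d_pos[OF i] xpow_in_A[OF i] by simp
  fix k assume "1 \<le> k \<and> xpow i k \<in> A"
  then have "deg n (xpow i k) = d" using A_deg by blast
  then show "k = d" using deg_xpow[OF i] by simp
qed

lemma mupow_eq: assumes "a \<in> vecs n" shows "mupow I a = smul d a"
  unfolding fun_eq_iff mupow_def smul_def
proof
  fix j show "a j * dexp I j = d * a j"
  proof (cases "j < n")
    case True then show ?thesis using dexp_eq by simp
  next
    case False then show ?thesis using assms by (simp add: vecs_def)
  qed
qed

lemma A_finite: "finite A"
proof -
  have "A \<subseteq> {f. \<forall>x. (x \<in> {..<n} \<longrightarrow> f x \<in> {..d}) \<and> (x \<notin> {..<n} \<longrightarrow> f x = 0)}"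
  proof
    fix a assume a: "a \<in> A"
    have "\<forall>x. (x \<in> {..<n} \<longrightarrow> a x \<in> {..d}) \<and> (x \<notin> {..<n} \<longrightarrow> a x = 0)"
    proof (intro allI conjI impI)
      fix x assume "x \<in> {..<n}" then show "a x \<in> {..d}" using coord_le_deg[of x n a] A_deg[OF a] by simp
    next
      fix x assume "x \<notin> {..<n}" then show "a x = 0" using a A_vecs by (auto simp: vecs_def)
    qed
    then show "a \<in> {f. \<forall>x. (x \<in> {..<n} \<longrightarrow> f x \<in> {..d}) \<and> (x \<notin> {..<n} \<longrightarrow> f x = 0)}" by simp
  qed
  then show ?thesis using finite_set_of_finite_funs[of "{..<n}" "{..d}" 0] finite_subset by blast
qed

fun P :: "nat \<Rightarrow> (nat \<Rightarrow> nat) set" where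
  "P 0 = {\<lambda>_. 0}"
| "P (Suc l) = sumset (P l) A"

lemma sumset_vecs: "S \<subseteq> vecs n \<Longrightarrow> T \<subseteq> vecs n \<Longrightarrow> sumset S T \<subseteq> vecs n"
  unfolding sumset_def using vecs_vadd by blast

lemma P_vecs: "P l \<subseteq> vecs n"
proof (induction l)
  case 0 then show ?case by (simp add: vecs_def)
next
  case (Suc l) then show ?case using sumset_vecs[OF _ A_vecs] by simp
qed

lemma P_deg: "a \<in> P l \<Longrightarrow> deg n a = l * d"
proof (induction l arbitrary: a)
  case 0 then show ?case by (simp add: deg_def)
next
  case (Suc l)
  then obtain b c where "a = vadd b c" "b \<in> P l" "c \<in> A" by (auto simp: sumset_def)
  then show ?case using Suc.IH A_deg deg_vadd by simp
qed

lemma mpow_P: "mpow n I l = gen n (P l)"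
proof (induction l)
  case 0
  show ?case by (auto simp: gen_def vecs_def le_fun_def)
next
  case (Suc l)
  have "mpow n I (Suc l) = mprod n (gen n (P l)) (gen n A)" using Suc I_gen by simp
  also have "\<dots> = gen n (P (Suc l))" using mprod_gen[OF P_vecs A_vecs] by simp
  finally show ?case .
qed

lemma mingens_mpow: "mingens (mpow n I l) = P l"
  using mingens_gen_equideg[OF P_vecs, of l "l*d"] P_deg mpow_P by simp

lemma P1: "P (Suc 0) = A"
  by (auto simp: sumset_def vadd_def)

lemma P2: "P 2 = sumset A A"
  using P1 by (simp add: numeral_2_eq_2)


lemma V_vecs: "V \<subseteq> vecs n" using vecs_xpow by auto

lemma cond3_iff: "mpow n I 2 = mprod n I (gen n V) \<longleftrightarrow> sumset A A = sumset A V"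
proof -
  have e1: "mpow n I 2 = gen n (sumset A A)" using mpow_P P2 by simp
  have e2: "mprod n I (gen n V) = gen n (sumset A V)" using mprod_gen[OF A_vecs V_vecs] I_gen by simp
  have d1: "\<forall>s\<in>sumset A A. deg n s = 2*d"
  proof
    fix s assume "s \<in> sumset A A"
    then obtain a b where "s = vadd a b" "a \<in> A" "b \<in> A" by (auto simp: sumset_def)
    then show "deg n s = 2*d" using A_deg deg_vadd by simp
  qed
  have d2: "\<forall>s\<in>sumset A V. deg n s = 2*d"
  proof
    fix s assume "s \<in> sumset A V"
    then obtain a b where "s = vadd a b" "a \<in> A" "b \<in> V" unfolding sumset_def by blast
    moreover then have "b \<in> A" using V_A by blast
    ultimately show "deg n s = 2*d" using A_deg deg_vadd by simp
  qed
  have m1: "mingens (gen n (sumset A A)) = sumset A A"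
    by (rule mingens_gen_equideg[of _ n "2*d"]) (rule sumset_vecs[OF A_vecs A_vecs], rule d1)
  have m2: "mingens (gen n (sumset A V)) = sumset A V"
    by (rule mingens_gen_equideg[of _ n "2*d"]) (rule sumset_vecs[OF A_vecs V_vecs], rule d2)
  show ?thesis unfolding e1 e2
  proof
    assume "gen n (sumset A A) = gen n (sumset A V)"
    then have "mingens (gen n (sumset A A)) = mingens (gen n (sumset A V))" by (rule arg_cong)
    then show "sumset A A = sumset A V" unfolding m1 m2 .
  next
    assume "sumset A A = sumset A V"
    then show "gen n (sumset A A) = gen n (sumset A V)" by (rule arg_cong)
  qed
qed

end


lemma sum_suc_twice: "2 * (\<Sum>j<n. Suc j) = n * (n + 1)"
  by (induction n) auto

lemma choose2_twice: "2 * (n choose 2) = n * (n - 1)"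
proof -
  have "even (n * (n - 1))" by auto
  then show ?thesis by (simp add: choose_two)
qed

context frs begin

lemma vadd_cancel: "vadd a c = vadd b c \<Longrightarrow> a = b"
  by (auto simp: vadd_def fun_eq_iff)

lemma card_V: assumes "0 < n" shows "card V = n"
proof -
  have dp: "0 < d" using d_pos[OF assms] .
  have "V = (\<lambda>i. xpow i d) ` {..<n}" by auto
  moreover have "inj_on (\<lambda>i. xpow i d) {..<n}"
  proof (rule inj_onI)
    fix i j assume "xpow i d = xpow j d"
    then have "xpow i d i = xpow j d i" by simp
    then show "i = j" using dp by (simp add: xpow_def split: if_splits)
  qed
  ultimately show ?thesis by (simp add: card_image)
qed

lemma card_VV: assumes "0 < n" shows "2 * card (sumset V V) = n * (n + 1)"
proof -
  have dp: "0 < d" using d_pos[OF assms] .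
  let ?f = "\<lambda>(j, i). vadd (xpow i d) (xpow j d)"
  let ?T = "SIGMA j:{..<n}. {..j}"
  have "sumset V V = ?f ` ?T"
  proof
    show "sumset V V \<subseteq> ?f ` ?T"
    proof
      fix s assume "s \<in> sumset V V"
      then obtain i j where s: "s = vadd (xpow i d) (xpow j d)" "i < n" "j < n"
        unfolding sumset_def by blast
      show "s \<in> ?f ` ?T"
      proof (cases "i \<le> j")
        case True then show ?thesis using s by (auto intro!: image_eqI[of _ _ "(j,i)"])
      next
        case False
        have "s = vadd (xpow j d) (xpow i d)" using s by (auto simp: vadd_def)
        then show ?thesis using s False by (auto intro!: image_eqI[of _ _ "(i,j)"])
      qed
    qed
    show "?f ` ?T \<subseteq> sumset V V"
    proof
      fix s assume "s \<in> ?f ` ?T"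
      then obtain i j where s: "s = vadd (xpow i d) (xpow j d)" "i \<le> j" "j < n" by auto
      then have "xpow i d \<in> V" "xpow j d \<in> V" by auto
      then show "s \<in> sumset V V" using s(1) unfolding sumset_def by blast
    qed
  qed
  moreover have "inj_on ?f ?T"
  proof (rule inj_onI)
    fix p q assume p: "p \<in> ?T" and q: "q \<in> ?T" and e: "?f p = ?f q"
    obtain j i where pj: "p = (j, i)" "i \<le> j" using p by auto
    obtain j' i' where qj: "q = (j', i')" "i' \<le> j'" using q by auto
    have e': "vadd (xpow i d) (xpow j d) = vadd (xpow i' d) (xpow j' d)" using e pj qj by simp
    have a1: "xpow i d j + xpow j d j = xpow i' d j + xpow j' d j" using fun_cong[OF e', of j] by (simp add: vadd_def)
    have a2: "xpow i d j' + xpow j d j' = xpow i' d j' + xpow j' d j'" using fun_cong[OF e', of j'] by (simp add: vadd_def)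
    have a3: "xpow i d i + xpow j d i = xpow i' d i + xpow j' d i" using fun_cong[OF e', of i] by (simp add: vadd_def)
    have a4: "xpow i d i' + xpow j d i' = xpow i' d i' + xpow j' d i'" using fun_cong[OF e', of i'] by (simp add: vadd_def)
    have "i = i' \<and> j = j'"
      using a1 a2 a3 a4 dp pj(2) qj(2) by (simp add: xpow_def split: if_splits)
    then show "p = q" using pj qj by simp
  qed
  ultimately have "card (sumset V V) = card ?T" by (simp add: card_image)
  also have "\<dots> = (\<Sum>j<n. Suc j)" by (simp add: card_SigmaI)
  finally show ?thesis using sum_suc_twice by simp
qed

end


lemma sumset_finite: "finite S \<Longrightarrow> finite T \<Longrightarrow> finite (sumset S T)"
proof -
  assume "finite S" "finite T"
  moreover have "sumset S T = (\<lambda>(a,b). vadd a b) ` (S \<times> T)" unfolding sumset_def by auto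
  ultimately show ?thesis by simp
qed

context frs begin

lemma card_AV: "int (card (sumset A V)) = int n * int (card A) - int (n choose 2)"
proof (cases "n = 0")
  case True
  then have "sumset A V = {}" by (auto simp: sumset_def)
  then show ?thesis using True by simp
next
  case False
  then have np: "0 < n" by simp
  have dp: "0 < d" using d_pos[OF np] .
  let ?B = "A - V"
  have fin: "finite A" using A_finite .
  have AV: "sumset A V = sumset ?B V \<union> sumset V V"
    using V_A unfolding sumset_def by blast
  have disj: "sumset ?B V \<inter> sumset V V = {}"
  proof (rule ccontr)
    assume "sumset ?B V \<inter> sumset V V \<noteq> {}"
    then obtain a i j k where a: "a \<in> A" "a \<notin> V" "i < n" "j < n" "k < n"
      and e: "vadd a (xpow i d) = vadd (xpow j d) (xpow k d)"
      unfolding sumset_def by blast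
    have ei: "a i + xpow i d i = xpow j d i + xpow k d i" using fun_cong[OF e, of i] by (simp add: vadd_def)
    have "i = j \<or> i = k" using ei dp by (simp add: xpow_def split: if_splits)
    then show False
    proof
      assume "i = j"
      then have "vadd a (xpow i d) = vadd (xpow k d) (xpow i d)" using e by (auto simp: vadd_def fun_eq_iff)
      then have "a = xpow k d" by (rule vadd_cancel)
      then show False using a by auto
    next
      assume "i = k"
      then have "vadd a (xpow i d) = vadd (xpow j d) (xpow i d)" using e by simp
      then have "a = xpow j d" by (rule vadd_cancel)
      then show False using a by auto
    qed
  qed
  let ?g = "\<lambda>(a, i). vadd a (xpow i d)"
  have BV: "sumset ?B V = ?g ` (?B \<times> {..<n})"
    unfolding sumset_def by auto
  have inj: "inj_on ?g (?B \<times> {..<n})"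
  proof (rule inj_onI)
    fix p q assume p: "p \<in> ?B \<times> {..<n}" and q: "q \<in> ?B \<times> {..<n}" and e: "?g p = ?g q"
    obtain a i where pa: "p = (a, i)" "a \<in> A" "a \<notin> V" "i < n" using p by auto
    obtain b j where qb: "q = (b, j)" "b \<in> A" "b \<notin> V" "j < n" using q by auto
    have e': "vadd a (xpow i d) = vadd b (xpow j d)" using e pa qb by simp
    show "p = q"
    proof (cases "i = j")
      case True
      then have "a = b" using e' vadd_cancel by simp
      then show ?thesis using pa qb True by simp
    next
      case False
      have "a j + xpow i d j = b j + xpow j d j" using fun_cong[OF e', of j] by (simp add: vadd_def)
      then have "d \<le> a j" using False by (simp add: xpow_def)
      then have "a = xpow j d" using big_coord[of a n d j] pa(2) A_vecs A_deg qb(4) by blast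
      then show ?thesis using pa qb by auto
    qed
  qed
  have cB: "card (sumset ?B V) = card ?B * n"
    using BV card_image[OF inj] by (simp add: card_cartesian_product)
  have cB2: "card ?B = card A - n"
    using card_Diff_subset[OF finite_subset[OF V_A fin] V_A] card_V[OF np] by simp
  have cVA: "n \<le> card A" using card_mono[OF fin V_A] card_V[OF np] by simp
  have finB: "finite (sumset ?B V)" using BV fin by simp
  have fV: "finite V" using finite_subset[OF V_A fin] .
  have finV: "finite (sumset V V)" by (rule sumset_finite[OF fV fV])
  have "card (sumset A V) = card (sumset ?B V \<union> sumset V V)" using AV by (rule arg_cong)
  also have "\<dots> = card (sumset ?B V) + card (sumset V V)" by (rule card_Un_disjoint[OF finB finV disj])
  finally have c: "card (sumset A V) = card (sumset ?B V) + card (sumset V V)" .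
  have h1: "2 * int (card (sumset V V)) = int n * (int n + 1)" 
    using arg_cong[OF card_VV[OF np], of int] by (simp add: algebra_simps)
  have h2: "2 * int (n choose 2) = int n * (int n - 1)" 
    using arg_cong[OF choose2_twice[of n], of int] np by (simp add: of_nat_diff)
  have h3: "int (card (sumset ?B V)) = (int (card A) - int n) * int n" using cB cB2 cVA by simp
  have "2 * int (card (sumset A V)) = 2 * (int n * int (card A) - int (n choose 2))"
    using c h1 h2 h3 by (simp add: algebra_simps)
  then show ?thesis by simp
qed

end


context frs begin

lemma AA_vecs: "sumset A A \<subseteq> vecs n" using sumset_vecs[OF A_vecs A_vecs] .

lemma AV_sub: "sumset A V \<subseteq> sumset A A" using V_A unfolding sumset_def by blast

lemma mingens2: "mingens (mpow n I 2) = sumset A A" using mingens_mpow[of 2] P2 by simp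

lemma freiman_iff: "freiman_primary n I \<longleftrightarrow> sumset A A = sumset A V"
proof
  assume "freiman_primary n I"
  then have "int (card (sumset A A)) = int (card (sumset A V))"
    unfolding freiman_primary_def mingens2 card_AV by simp
  then have c: "card (sumset A V) = card (sumset A A)" by simp
  have "finite (sumset A A)" using sumset_finite[OF A_finite A_finite] .
  then show "sumset A A = sumset A V" using card_subset_eq[OF _ AV_sub c] by simp
next
  assume h: "sumset A A = sumset A V"
  show "freiman_primary n I" unfolding freiman_primary_def mingens2 h by (rule card_AV)
qed

definition Q :: "nat \<Rightarrow> (nat \<Rightarrow> nat) set" where
  "Q k = {vadd b (smul d a) | b a. b \<in> A \<and> a \<in> vecs n \<and> deg n a = k}"

lemma deg0: assumes "a \<in> vecs n" "deg n a = 0" shows "a = (\<lambda>_. 0)"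
proof -
  have "(\<lambda>_. 0) \<le> a" by (simp add: le_fun_def)
  moreover have "(\<lambda>_. 0::nat) \<in> vecs n" by (simp add: vecs_def)
  moreover have "deg n (\<lambda>_. 0) = 0" by (simp add: deg_def)
  ultimately show ?thesis using deg_eq_le[of "\<lambda>_. 0" n a] assms by simp
qed

lemma pos_coord: assumes "a \<in> vecs n" "deg n a \<noteq> 0" shows "\<exists>j<n. 0 < a j"
proof (rule ccontr)
  assume "\<not> (\<exists>j<n. 0 < a j)"
  then have "deg n a = 0" by (simp add: deg_def)
  then show False using assms by simp
qed

lemma P_Q: assumes h: "sumset A A = sumset A V" shows "P (Suc k) = Q k"
proof (induction k)
  case 0
  show ?case
  proof
    show "P (Suc 0) \<subseteq> Q 0"
    proof
      fix b assume "b \<in> P (Suc 0)"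
      then have b: "b \<in> A" using P1 by simp
      have "b = vadd b (smul d (\<lambda>_. 0))" by (simp add: vadd_def smul_def)
      moreover have "(\<lambda>_. 0::nat) \<in> vecs n" "deg n (\<lambda>_. 0) = 0" by (simp_all add: vecs_def deg_def)
      ultimately show "b \<in> Q 0" using b unfolding Q_def by blast
    qed
    show "Q 0 \<subseteq> P (Suc 0)"
    proof
      fix x assume "x \<in> Q 0"
      then obtain b a where x: "x = vadd b (smul d a)" "b \<in> A" "a \<in> vecs n" "deg n a = 0"
        unfolding Q_def by blast
      have "a = (\<lambda>_. 0)" using deg0 x by simp
      then have "x = b" using x by (simp add: vadd_def smul_def)
      then show "x \<in> P (Suc 0)" using x P1 by simp
    qed
  qed
next
  case (Suc k)
  have e: "P (Suc (Suc k)) = sumset (Q k) A" using Suc by simp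
  show ?case unfolding e
  proof
    show "sumset (Q k) A \<subseteq> Q (Suc k)"
    proof
      fix x assume "x \<in> sumset (Q k) A"
      then obtain b a b' where x: "x = vadd (vadd b (smul d a)) b'" "b \<in> A" "a \<in> vecs n" "deg n a = k" "b' \<in> A"
        unfolding sumset_def Q_def by blast
      have "vadd b b' \<in> sumset A A" using x unfolding sumset_def by blast
      then have "vadd b b' \<in> sumset A V" using h by simp
      then obtain b'' j where bb: "vadd b b' = vadd b'' (xpow j d)" "b'' \<in> A" "j < n"
        unfolding sumset_def by blast
      have "x = vadd b'' (smul d (vadd a (xpow j 1)))"
      proof
        fix t
        have "b t + b' t = b'' t + xpow j d t" using fun_cong[OF bb(1), of t] by (simp add: vadd_def)
        then show "x t = vadd b'' (smul d (vadd a (xpow j 1))) t"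
          using x(1) by (simp add: vadd_def smul_def xpow_def algebra_simps)
      qed
      moreover have "vadd a (xpow j 1) \<in> vecs n" using vecs_vadd[OF x(3) vecs_xpow[OF bb(3)]] .
      moreover have "deg n (vadd a (xpow j 1)) = Suc k" using deg_vadd deg_xpow[OF bb(3)] x(4) by simp
      ultimately show "x \<in> Q (Suc k)" using bb(2) unfolding Q_def by blast
    qed
    show "Q (Suc k) \<subseteq> sumset (Q k) A"
    proof
      fix x assume "x \<in> Q (Suc k)"
      then obtain b a' where x: "x = vadd b (smul d a')" "b \<in> A" "a' \<in> vecs n" "deg n a' = Suc k"
        unfolding Q_def by blast
      obtain j where j: "j < n" "0 < a' j" using pos_coord[OF x(3)] x(4) by auto
      define a where "a = (\<lambda>t. if t = j then a' j - 1 else a' t)"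
      have a': "a' = vadd a (xpow j 1)" using j by (auto simp: a_def vadd_def xpow_def)
      have av: "a \<in> vecs n" using x(3) j by (auto simp: a_def vecs_def)
      have "deg n a = k" using x(4) deg_vadd[of n a "xpow j 1"] deg_xpow[OF j(1)] a' by simp
      then have "vadd b (smul d a) \<in> Q k" using x(2) av unfolding Q_def by blast
      moreover have "x = vadd (vadd b (smul d a)) (xpow j d)"
        using x(1) a' by (auto simp: vadd_def smul_def xpow_def algebra_simps)
      moreover have "xpow j d \<in> A" using xpow_in_A[OF j(1)] .
      ultimately show "x \<in> sumset (Q k) A" unfolding sumset_def by blast
    qed
  qed
qed

lemma Q_box: assumes "b \<in> A" "a \<in> vecs n" shows "vadd b (smul d a) \<in> box n I a"
  unfolding box_def
proof (intro CollectI conjI allI impI)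
  show "vadd b (smul d a) \<in> vecs n" using vecs_vadd[OF _ vecs_smul[OF assms(2)]] assms(1) A_vecs by blast
next
  fix i assume i: "i < n"
  show "a i * dexp I i \<le> vadd b (smul d a) i" using dexp_eq[OF i] by (simp add: vadd_def smul_def)
  have "b i \<le> d" using coord_le_deg[OF i, of b] A_deg[OF assms(1)] by simp
  then show "vadd b (smul d a) i \<le> (a i + 1) * dexp I i" using dexp_eq[OF i] by (simp add: vadd_def smul_def algebra_simps)
qed

end


context frs begin

lemma imp_vg: assumes h: "sumset A A = sumset A V" shows "very_good n I"
  unfolding very_good_def good_def
proof (intro conjI ballI allI impI)
  show "m_primary n I" using mp .
next
  fix l m assume l: "1 \<le> l" and m: "m \<in> mingens (mpow n I l)"
  have "m \<in> P (Suc (l - 1))" using m mingens_mpow l by simp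
  then have "m \<in> Q (l - 1)" using P_Q[OF h] by simp
  then obtain b a where x: "m = vadd b (smul d a)" "b \<in> A" "a \<in> vecs n" "deg n a = l - 1"
    unfolding Q_def by blast
  then show "\<exists>a\<in>vecs n. deg n a = l - 1 \<and> m \<in> box n I a" using Q_box by blast
next
  fix a assume av: "a \<in> vecs n"
  let ?G = "{(\<lambda>i. m i - mupow I a i) | m. m \<in> box n I a \<inter> mingens (mpow n I (deg n a + 1))}"
  have mg: "mingens (mpow n I (deg n a + 1)) = Q (deg n a)"
    using mingens_mpow[of "Suc (deg n a)"] P_Q[OF h] by simp
  have mu: "mupow I a = smul d a" using mupow_eq[OF av] .
  have "?G = A"
  proof
    show "A \<subseteq> ?G"
    proof
      fix b assume b: "b \<in> A"
      let ?m = "vadd b (smul d a)"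
      have "?m \<in> Q (deg n a)" using b av unfolding Q_def by blast
      moreover have "?m \<in> box n I a" using Q_box[OF b av] .
      moreover have "b = (\<lambda>i. ?m i - mupow I a i)" unfolding mu by (simp add: vadd_def smul_def)
      ultimately show "b \<in> ?G" unfolding mg by blast
    qed
    show "?G \<subseteq> A"
    proof
      fix c assume "c \<in> ?G"
      then obtain m where c: "c = (\<lambda>i. m i - smul d a i)" "m \<in> box n I a" "m \<in> Q (deg n a)"
        unfolding mg mu by blast
      then obtain b a' where x: "m = vadd b (smul d a')" "b \<in> A" "a' \<in> vecs n" "deg n a' = deg n a"
        unfolding Q_def by blast
      have low: "\<forall>i<n. smul d a i \<le> m i" using c(2) dexp_eq unfolding box_def smul_def
        by (simp add: mult.commute)
      show "c \<in> A"
      proof (cases "a' \<le> a")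
        case True
        then have "a' = a" using deg_eq_le[OF x(3) av] x(4) by simp
        then have "c = b" using c(1) x(1) by (simp add: vadd_def smul_def)
        then show ?thesis using x(2) by simp
      next
        case False
        then obtain i where i: "a i < a' i" by (auto simp: le_fun_def not_le)
        have "i < n"
        proof (rule ccontr)
          assume "\<not> i < n" then show False using i x(3) by (simp add: vecs_def)
        qed
        have cv: "c \<in> vecs n" using c(1) c(2) by (simp add: box_def vecs_def)
        have "d * (a i + 1) \<le> d * a' i" using i by (intro mult_le_mono2) simp
        then have ci: "d \<le> c i" using c(1) x(1) by (simp add: vadd_def smul_def algebra_simps)
        have "deg n c = deg n m - deg n (smul d a)"
          unfolding deg_def c(1) by (rule sum_subtractf_nat) (use low in auto)
        also have "\<dots> = d" using x(1) x(4) deg_vadd deg_smul A_deg[OF x(2)] by simp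
        finally have "c = xpow i d" using big_coord[OF cv _ \<open>i < n\<close> ci] by simp
        then show ?thesis using xpow_in_A[OF \<open>i < n\<close>] by simp
      qed
    qed
  qed
  then show "Ia n I a = I" unfolding Ia_def using I_gen by simp
qed

lemma vg_imp: assumes vg: "very_good n I" shows "sumset A A = sumset A V"
proof
  show "sumset A V \<subseteq> sumset A A" using AV_sub .
  show "sumset A A \<subseteq> sumset A V"
  proof
    fix m assume mA: "m \<in> sumset A A"
    then have mm: "m \<in> mingens (mpow n I 2)" using mingens2 by simp
    have mdeg: "deg n m = 2 * d" using mA A_deg deg_vadd unfolding sumset_def by auto
    have mv: "m \<in> vecs n" using mA AA_vecs by blast
    obtain a where a: "a \<in> vecs n" "deg n a = 1" "m \<in> box n I a"
    proof -
      have "\<forall>l\<ge>1. \<forall>m\<in>mingens (mpow n I l). \<exists>a\<in>vecs n. deg n a = l - 1 \<and> m \<in> box n I a"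
        using vg unfolding very_good_def good_def by blast
      then have "\<exists>a\<in>vecs n. deg n a = 2 - 1 \<and> m \<in> box n I a" using mm by (meson one_le_numeral)
      then show ?thesis using that by auto
    qed
    obtain i where i: "i < n" "0 < a i" using pos_coord[OF a(1)] a(2) by auto
    have ax: "a = xpow i 1" using big_coord[OF a(1) a(2) i(1)] i(2) by simp
    have Ia: "Ia n I a = I" using vg a(1) unfolding very_good_def by blast
    let ?c = "\<lambda>t. m t - mupow I a t"
    have "mupow I a = smul d a" by (rule mupow_eq[OF a(1)])
    also have "\<dots> = xpow i d" unfolding ax by (auto simp: smul_def xpow_def)
    finally have mu: "mupow I a = xpow i d" .
    have "?c \<in> vecs n" using mv by (simp add: vecs_def)
    moreover have "m \<in> box n I a \<inter> mingens (mpow n I (deg n a + 1))" using a(3) mm unfolding a(2) one_add_one by simp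
    ultimately have "?c \<in> Ia n I a" unfolding Ia_def gen_def by blast
    then have cI: "?c \<in> I" using Ia by simp
    have "a i * dexp I i \<le> m i" using a(3) i(1) unfolding box_def by blast
    then have mi: "d \<le> m i" using ax dexp_eq[OF i(1)] by (simp add: xpow_def)
    have meq: "m = vadd ?c (xpow i d)" unfolding mu using mi by (auto simp: vadd_def xpow_def fun_eq_iff)
    have cdeg: "deg n ?c = d" using mdeg deg_vadd[of n ?c "xpow i d"] deg_xpow[OF i(1)] meq by simp
    obtain c' where c': "c' \<in> A" "c' \<le> ?c" using mingens_below[OF I_vecs cI] by blast
    have "c' = ?c" using deg_eq_le[OF _ _ c'(2)] c'(1) A_vecs A_deg cdeg I_vecs cI by blast
    then have "?c \<in> A" using c'(1) by simp
    then show "m \<in> sumset A V" using meq i(1) unfolding sumset_def by blast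
  qed
qed

end

theorem mainTheorem20:
  fixes n d :: nat and I :: "(nat \<Rightarrow> nat) set"
  assumes "m_primary n I"
    and "equigenerated n I d"
  defines "J \<equiv> gen n {xpow i d | i. i < n}"
  shows "(freiman_primary n I \<longleftrightarrow> very_good n I) \<and>
         (very_good n I \<longleftrightarrow> mpow n I 2 = mprod n I J)"
proof -
  interpret frs n d I using assms(1,2) by unfold_locales
  show ?thesis unfolding J_def using freiman_iff imp_vg vg_imp cond3_iff by blast
qed

end
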